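(* Let $(T,f)$ be a merge tree and $\sigma\colon[0,1]\to T$ a curve. Any two distinct maximal violating subcurves of $\sigma$ are interior-disjoint.
   Context: A merge tree $(T,f)$: a finite rooted tree $T$ identified with its topological realisation, with a continuous $f\colon T\to\mathbb{R}\cup\{\infty\}$ strictly increasing towards the root, $f(v)=\infty$ iff $v$ is the root. A curve on $T$ is a continuous map $\sigma\colon[0,1]\to T$. A subcurve $[\ell,r]$ ($\ell,r\in[0,1]$) of $\sigma$ is violating if $\ell<r$, $\sigma(\ell)=\sigma(r)$, and $f(\sigma(t))>f(\sigma(\ell))$ for all $t\in(\ell,r)$. A violating subcurve is maximal if the interval is not contained in (the interval of) any other violating subcurve of $\sigma$. Two subcurves $[\ell_1,r_1],[\ell_2,r_2]$ are interior-disjoint if $(\ell_1,r_1)\cap(\ell_2,r_2)=\emptyset$. *)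

theory Defs
  imports "HOL-Analysis.Analysis" "HOL-Library.Extended_Real"
begin

definition rooted_tree :: "'v::finite \<Rightarrow> ('v \<Rightarrow> 'v) \<Rightarrow> bool" where
  "rooted_tree r par \<longleftrightarrow> par r = r \<and> (\<forall>v. \<exists>n. (par ^^ n) v = r)"

definition tree_realisation :: "'v::finite \<Rightarrow> ('v \<Rightarrow> 'v) \<Rightarrow> (real^'v) set" where
  "tree_realisation r par =
     {axis r 1} \<union> (\<Union>v\<in>-{r}. closed_segment (axis v 1) (axis (par v) 1))"

definition merge_tree :: "'v::finite \<Rightarrow> ('v \<Rightarrow> 'v) \<Rightarrow> (real^'v \<Rightarrow> ereal) \<Rightarrow> bool" where
  "merge_tree r par f \<longleftrightarrow>
     rooted_tree r par \<and>
     continuous_on (tree_realisation r par) f \<and>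
     (\<forall>x\<in>tree_realisation r par. f x \<noteq> -\<infinity>) \<and>
     (\<forall>x\<in>tree_realisation r par. f x = \<infinity> \<longleftrightarrow> x = axis r 1) \<and>
     (\<forall>g. arc g \<and> path_image g \<subseteq> tree_realisation r par \<and> pathfinish g = axis r 1
          \<longrightarrow> strict_mono_on {0..1} (f \<circ> g))"

definition curve_on :: "(real^'v) set \<Rightarrow> (real \<Rightarrow> real^'v) \<Rightarrow> bool" where
  "curve_on T \<sigma> \<longleftrightarrow> continuous_on {0..1} \<sigma> \<and> \<sigma> ` {0..1} \<subseteq> T"

definition violating :: "('a \<Rightarrow> ereal) \<Rightarrow> (real \<Rightarrow> 'a) \<Rightarrow> real \<Rightarrow> real \<Rightarrow> bool" where
  "violating f \<sigma> l r \<longleftrightarrow> l \<in> {0..1} \<and> r \<in> {0..1} \<and> l < r \<and> \<sigma> l = \<sigma> r \<and>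
     (\<forall>t\<in>{l<..<r}. f (\<sigma> t) > f (\<sigma> l))"

definition maximal_violating :: "('a \<Rightarrow> ereal) \<Rightarrow> (real \<Rightarrow> 'a) \<Rightarrow> real \<Rightarrow> real \<Rightarrow> bool" where
  "maximal_violating f \<sigma> l r \<longleftrightarrow> violating f \<sigma> l r \<and>
     (\<forall>l' r'. violating f \<sigma> l' r' \<and> {l..r} \<subseteq> {l'..r'} \<longrightarrow> (l', r') = (l, r))"

end

theory Submission
  imports Defs
begin

lemma aux:
  assumes "maximal_violating f \<sigma> l1 r1"
    and "maximal_violating f \<sigma> l2 r2"
    and "(l1, r1) \<noteq> (l2, r2)"
    and "l1 \<le> l2"
  shows "{l1<..<r1} \<inter> {l2<..<r2} = {}"
proof (rule ccontr)
  assume ne: "{l1<..<r1} \<inter> {l2<..<r2} \<noteq> {}"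
  have v1: "violating f \<sigma> l1 r1" and v2: "violating f \<sigma> l2 r2"
    using assms(1,2) unfolding maximal_violating_def by auto
  have m1: "\<And>l' r'. violating f \<sigma> l' r' \<Longrightarrow> {l1..r1} \<subseteq> {l'..r'} \<Longrightarrow> (l', r') = (l1, r1)"
    using assms(1) unfolding maximal_violating_def by blast
  have m2: "\<And>l' r'. violating f \<sigma> l' r' \<Longrightarrow> {l2..r2} \<subseteq> {l'..r'} \<Longrightarrow> (l', r') = (l2, r2)"
    using assms(2) unfolding maximal_violating_def by blast
  have lt1: "l1 < r1" and lt2: "l2 < r2" using v1 v2 unfolding violating_def by auto
  have "l2 < r1" using ne by auto
  show False
  proof (cases "r2 \<le> r1")
    case True
    then have "{l2..r2} \<subseteq> {l1..r1}" using assms(4) by auto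
    then show False using m2[OF v1] assms(3) by auto
  next
    case False
    show False
    proof (cases "l1 = l2")
      case True
      then have "{l1..r1} \<subseteq> {l2..r2}" using False by auto
      then show False using m1[OF v2] assms(3) by auto
    next
      case ne2: False
      have a: "f (\<sigma> l2) > f (\<sigma> l1)" using v1 ne2 assms(4) \<open>l2 < r1\<close>
        unfolding violating_def by auto
      have b: "f (\<sigma> r1) > f (\<sigma> l2)" using v2 False \<open>l2 < r1\<close>
        unfolding violating_def by auto
      have "\<sigma> r1 = \<sigma> l1" using v1 unfolding violating_def by auto
      then show False using a b by auto
    qed
  qed
qed

theorem lemma18:
  fixes r :: "'v::finite" and par :: "'v \<Rightarrow> 'v" and f :: "real^'v \<Rightarrow> ereal"
    and \<sigma> :: "real \<Rightarrow> real^'v" and l1 r1 l2 r2 :: real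
  assumes "merge_tree r par f"
    and "curve_on (tree_realisation r par) \<sigma>"
    and "maximal_violating f \<sigma> l1 r1"
    and "maximal_violating f \<sigma> l2 r2"
    and "(l1, r1) \<noteq> (l2, r2)"
  shows "{l1<..<r1} \<inter> {l2<..<r2} = {}"
proof (cases "l1 \<le> l2")
  case True
  then show ?thesis using aux assms(3,4,5) by blast
next
  case False
  then have "{l2<..<r2} \<inter> {l1<..<r1} = {}" using aux[OF assms(4,3)] assms(5) by auto
  then show ?thesis by blast
qed

end
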